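(* Let $(Y,G)$ and $(X,G)$ be compact metrizable dynamical systems and $\pi:Y\to X$ a factor map (continuous, surjective, $G$-equivariant) which is finite-to-one and a local homeomorphism (every point of $Y$ has a neighborhood on which $\pi$ restricts to a homeomorphism onto its image). Suppose $X$ is connected and $G$ is a compactly generated locally compact abelian group, i.e. there is a compact neighborhood $K$ of $0$ in $G$ with $G=\bigcup_{n\in\mathbb N}nK$, where $nK=K+\dots+K$ ($n$ summands). If $(X,G)$ is equicontinuous, then $(Y,G)$ is equicontinuous.
   Context: A system $(Z,G)$ with $Z$ a compact metric space and $G$ acting continuously is equicontinuous if the family of homeomorphisms $\{z\mapsto t\cdot z\}_{t\in G}$ is equicontinuous at every point of $Z$. *)

theory Defs
  imports "HOL-Analysis.Analysis"
begin

definition continuous_group_action :: "('g::{topological_space,ab_group_add} \<Rightarrow> 'z::topological_space \<Rightarrow> 'z) \<Rightarrow> bool" where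
  "continuous_group_action act \<longleftrightarrow>
     (\<forall>z. act 0 z = z) \<and> (\<forall>s t z. act (s + t) z = act s (act t z)) \<and>
     continuous_on UNIV (\<lambda>p. act (fst p) (snd p))"

definition equicontinuous_system :: "('g \<Rightarrow> 'z::metric_space \<Rightarrow> 'z) \<Rightarrow> bool" where
  "equicontinuous_system act \<longleftrightarrow>
     (\<forall>z. \<forall>e>0. \<exists>d>0. \<forall>z'. dist z z' < d \<longrightarrow> (\<forall>t. dist (act t z) (act t z') < e))"

definition topological_ab_group :: "'g::{topological_space,ab_group_add} itself \<Rightarrow> bool" where
  "topological_ab_group _ \<longleftrightarrow>
     continuous_on (UNIV :: ('g \<times> 'g) set) (\<lambda>p. fst p + snd p) \<and>
     continuous_on (UNIV :: 'g set) uminus"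

fun nfold_sum :: "nat \<Rightarrow> 'g::ab_group_add set \<Rightarrow> 'g set" where
  "nfold_sum 0 K = {0}"
| "nfold_sum (Suc n) K = {a + b | a b. a \<in> K \<and> b \<in> nfold_sum n K}"

definition compactly_generated :: "'g::{topological_space,ab_group_add} itself \<Rightarrow> bool" where
  "compactly_generated _ \<longleftrightarrow>
     (\<exists>K :: 'g set. compact K \<and> 0 \<in> interior K \<and> (\<Union>n. nfold_sum n K) = UNIV)"

definition local_homeomorphism :: "('a::topological_space \<Rightarrow> 'b::topological_space) \<Rightarrow> bool" where
  "local_homeomorphism f \<longleftrightarrow>
     (\<forall>y. \<exists>U g. open U \<and> y \<in> U \<and> homeomorphism U (f ` U) f g)"

end

theory Submission
  imports "HOL-Analysis.Analysis" Defs
begin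

lemma pair_subseq:
  fixes f :: "nat \<Rightarrow> 'y::metric_space \<times> 'y"
  assumes "compact (UNIV::'y set)"
  obtains r a b where "strict_mono r" "(\<lambda>n. fst (f (r n))) \<longlonglongrightarrow> a" "(\<lambda>n. snd (f (r n))) \<longlonglongrightarrow> b"
proof -
  have "compact (UNIV :: ('y\<times>'y) set)" using compact_Times[OF assms assms] by simp
  then have "seq_compact (UNIV :: ('y\<times>'y) set)" by (rule compact_imp_seq_compact)
  then obtain l r where r: "strict_mono r" "(f \<circ> r) \<longlonglongrightarrow> l" using seq_compactE[of UNIV f] by blast
  have "(\<lambda>n. fst ((f \<circ> r) n)) \<longlonglongrightarrow> fst l" by (rule tendsto_fst[OF r(2)])
  moreover have "(\<lambda>n. snd ((f \<circ> r) n)) \<longlonglongrightarrow> snd l" by (rule tendsto_snd[OF r(2)])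
  ultimately show ?thesis using that r(1) by auto
qed

lemma lim_eq_if_close:
  fixes u v :: "nat \<Rightarrow> 'y::metric_space"
  assumes "strict_mono r" "(\<lambda>n. u (r n)) \<longlonglongrightarrow> a" "(\<lambda>n. v (r n)) \<longlonglongrightarrow> b"
    and "\<And>n. dist (u n) (v n) < 1 / real (Suc n)"
  shows "a = b"
proof -
  have "(\<lambda>n. dist (u (r n)) (v (r n))) \<longlonglongrightarrow> dist a b"
    using tendsto_dist[OF assms(2,3)] .
  moreover have "(\<lambda>n. dist (u (r n)) (v (r n))) \<longlonglongrightarrow> 0"
  proof (rule LIMSEQ_norm_0)
    fix n
    have "n \<le> r n" using seq_suble[OF assms(1)] by simp
    then have "1 / real (Suc (r n)) \<le> 1 / real (Suc n)"
      by (simp add: frac_le)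
    then show "norm (dist (u (r n)) (v (r n))) < 1 / real (Suc n)"
      using assms(4)[of "r n"] by simp
  qed
  ultimately have "dist a b = 0" using LIMSEQ_unique by blast
  then show ?thesis by simp
qed

lemma sep_lemma:
  fixes \<pi> :: "'y::metric_space \<Rightarrow> 'x::topological_space"
  assumes "compact (UNIV::'y set)" "local_homeomorphism \<pi>"
  shows "\<exists>\<eta>>0. \<forall>a b. \<pi> a = \<pi> b \<and> dist a b < \<eta> \<longrightarrow> a = b"
proof (rule ccontr)
  assume "\<not> ?thesis"
  then have "\<forall>n. \<exists>p. \<pi> (fst p) = \<pi> (snd p) \<and> dist (fst p) (snd p) < 1 / real (Suc n) \<and> fst p \<noteq> snd p"
    by (metis fst_conv snd_conv divide_pos_pos of_nat_0_less_iff zero_less_Suc zero_less_one)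
  then obtain f where f: "\<And>n. \<pi> (fst (f n)) = \<pi> (snd (f n)) \<and> dist (fst (f n)) (snd (f n)) < 1 / real (Suc n) \<and> fst (f n) \<noteq> snd (f n)"
    by metis
  obtain r a b where r: "strict_mono r" "(\<lambda>n. fst (f (r n))) \<longlonglongrightarrow> a" "(\<lambda>n. snd (f (r n))) \<longlonglongrightarrow> b"
    using pair_subseq[OF assms(1), of f] by blast
  have ab: "a = b" using lim_eq_if_close[of r "\<lambda>n. fst (f n)" a "\<lambda>n. snd (f n)" b] r f by blast
  obtain U g where U: "open U" "a \<in> U" "homeomorphism U (\<pi> ` U) \<pi> g"
    using assms(2) unfolding local_homeomorphism_def by blast
  have "\<forall>\<^sub>F n in sequentially. fst (f (r n)) \<in> U" using r(2) U topological_tendstoD by blast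
  moreover have "\<forall>\<^sub>F n in sequentially. snd (f (r n)) \<in> U" using r(3) U ab topological_tendstoD by blast
  ultimately obtain n where n: "fst (f (r n)) \<in> U" "snd (f (r n)) \<in> U"
    using eventually_happens'[OF sequentially_bot] eventually_conj by blast
  have "fst (f (r n)) = snd (f (r n))"
    using homeomorphism_apply1[OF U(3) n(1)] homeomorphism_apply1[OF U(3) n(2)] f[of "r n"] by metis
  then show False using f[of "r n"] by blast
qed

lemma lift_lemma:
  fixes \<pi> :: "'y::metric_space \<Rightarrow> 'x::metric_space"
  assumes "compact (UNIV::'y set)" "continuous_on UNIV \<pi>"
    and sep: "\<forall>a b. \<pi> a = \<pi> b \<and> dist a b < \<eta>0 \<longrightarrow> a = b" and "\<eta>0 > 0"
    and "e > 0"
  shows "\<exists>\<rho>>0. \<forall>a b. dist a b < \<eta>0/2 \<and> dist (\<pi> a) (\<pi> b) < \<rho> \<longrightarrow> dist a b < e"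
proof (rule ccontr)
  assume "\<not> ?thesis"
  then have "\<forall>n. \<exists>p. dist (fst p) (snd p) < \<eta>0/2 \<and> dist (\<pi> (fst p)) (\<pi> (snd p)) < 1 / real (Suc n) \<and> \<not> dist (fst p) (snd p) < e"
    by (metis fst_conv snd_conv divide_pos_pos of_nat_0_less_iff zero_less_Suc zero_less_one)
  then obtain f where f: "\<And>n. dist (fst (f n)) (snd (f n)) < \<eta>0/2 \<and> dist (\<pi> (fst (f n))) (\<pi> (snd (f n))) < 1 / real (Suc n) \<and> \<not> dist (fst (f n)) (snd (f n)) < e"
    by metis
  obtain r a b where r: "strict_mono r" "(\<lambda>n. fst (f (r n))) \<longlonglongrightarrow> a" "(\<lambda>n. snd (f (r n))) \<longlonglongrightarrow> b"
    using pair_subseq[OF assms(1), of f] by blast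
  have c: "isCont \<pi> z" for z using assms(2) continuous_on_eq_continuous_at by blast
  have ra: "(\<lambda>n. \<pi> (fst (f (r n)))) \<longlonglongrightarrow> \<pi> a" using isCont_tendsto_compose[OF c r(2)] .
  have rb: "(\<lambda>n. \<pi> (snd (f (r n)))) \<longlonglongrightarrow> \<pi> b" using isCont_tendsto_compose[OF c r(3)] .
  have pab: "\<pi> a = \<pi> b"
    using lim_eq_if_close[of r "\<lambda>n. \<pi> (fst (f n))" "\<pi> a" "\<lambda>n. \<pi> (snd (f n))" "\<pi> b"] r(1) ra rb f by blast
  have dl: "(\<lambda>n. dist (fst (f (r n))) (snd (f (r n)))) \<longlonglongrightarrow> dist a b"
    using tendsto_dist[OF r(2,3)] .
  have "dist a b \<le> \<eta>0/2"
    by (rule LIMSEQ_le_const2[OF dl]) (use f less_imp_le in blast)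
  then have "a = b" using sep pab \<open>\<eta>0 > 0\<close> by force
  moreover have "e \<le> dist a b"
    by (rule LIMSEQ_le_const[OF dl]) (use f not_less in blast)
  ultimately show False using \<open>e > 0\<close> by simp
qed

lemma unif_lemma:
  fixes F :: "'i \<Rightarrow> 'y::metric_space \<Rightarrow> 'z::metric_space"
  assumes "compact (UNIV::'y set)"
    and pw: "\<And>a e. e > 0 \<Longrightarrow> \<exists>d>0. \<forall>b. dist a b < d \<longrightarrow> (\<forall>k\<in>K. dist (F k a) (F k b) < e)"
    and "e > 0"
  shows "\<exists>d>0. \<forall>a b. dist a b < d \<longrightarrow> (\<forall>k\<in>K. dist (F k a) (F k b) < e)"
proof (rule ccontr)
  assume "\<not> ?thesis"
  then have "\<forall>n. \<exists>q. dist (fst (fst q)) (snd (fst q)) < 1 / real (Suc n) \<and> snd q \<in> K \<and> \<not> dist (F (snd q) (fst (fst q))) (F (snd q) (snd (fst q))) < e"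
    by (metis fst_conv snd_conv divide_pos_pos of_nat_0_less_iff zero_less_Suc zero_less_one)
  then obtain q where q: "\<And>n. dist (fst (fst (q n))) (snd (fst (q n))) < 1 / real (Suc n) \<and> snd (q n) \<in> K \<and> \<not> dist (F (snd (q n)) (fst (fst (q n)))) (F (snd (q n)) (snd (fst (q n)))) < e"
    by metis
  obtain r a b where r: "strict_mono r" "(\<lambda>n. fst (fst (q (r n)))) \<longlonglongrightarrow> a" "(\<lambda>n. snd (fst (q (r n)))) \<longlonglongrightarrow> b"
    using pair_subseq[OF assms(1), of "\<lambda>n. fst (q n)"] by blast
  have ab: "a = b" using lim_eq_if_close[of r "\<lambda>n. fst (fst (q n))" a "\<lambda>n. snd (fst (q n))" b] r q by blast
  obtain d where d: "d > 0" "\<forall>b. dist a b < d \<longrightarrow> (\<forall>k\<in>K. dist (F k a) (F k b) < e/2)"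
    using pw[of "e/2" a] \<open>e > 0\<close> by auto
  have "\<forall>\<^sub>F n in sequentially. dist (fst (fst (q (r n)))) a < d"
    using r(2) d(1) tendstoD by blast
  moreover have "\<forall>\<^sub>F n in sequentially. dist (snd (fst (q (r n)))) a < d"
    using r(3) d(1) ab tendstoD by blast
  ultimately obtain n where n: "dist (fst (fst (q (r n)))) a < d" "dist (snd (fst (q (r n)))) a < d"
    using eventually_happens'[OF sequentially_bot] eventually_conj by blast
  define k where "k = snd (q (r n))"
  have kK: "k \<in> K" using q k_def by blast
  have "dist (F k a) (F k (fst (fst (q (r n))))) < e/2" using d(2) n(1) kK by (metis dist_commute)
  moreover have "dist (F k a) (F k (snd (fst (q (r n))))) < e/2" using d(2) n(2) kK by (metis dist_commute)
  ultimately have "dist (F k (fst (fst (q (r n))))) (F k (snd (fst (q (r n))))) < e"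
    using dist_triangle3[of "F k (fst (fst (q (r n))))" "F k (snd (fst (q (r n))))" "F k a"] by linarith
  then show False using q[of "r n"] k_def by blast
qed



theorem mainTheorem4:
  fixes actY :: "'g::{t2_space,ab_group_add} \<Rightarrow> 'y::metric_space \<Rightarrow> 'y"
    and actX :: "'g \<Rightarrow> 'x::metric_space \<Rightarrow> 'x"
    and \<pi> :: "'y \<Rightarrow> 'x"
  assumes "topological_ab_group TYPE('g)"
    and "locally_compact_space (euclidean :: 'g topology)"
    and "compactly_generated TYPE('g)"
    and "compact (UNIV :: 'y set)"
    and "compact (UNIV :: 'x set)"
    and "continuous_group_action actY"
    and "continuous_group_action actX"
    and "continuous_on UNIV \<pi>"
    and "surj \<pi>"
    and "\<And>t y. \<pi> (actY t y) = actX t (\<pi> y)"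
    and "\<And>x. finite (\<pi> -` {x})"
    and "local_homeomorphism \<pi>"
    and "connected (UNIV :: 'x set)"
    and "equicontinuous_system actX"
  shows "equicontinuous_system actY"
proof -
  obtain K :: "'g set" where K: "compact K" "(\<Union>n. nfold_sum n K) = UNIV"
    using assms(3) unfolding compactly_generated_def by blast
  have act0: "\<And>z. actY 0 z = z" and actadd: "\<And>s t z. actY (s + t) z = actY s (actY t z)"
    and actc: "continuous_on UNIV (\<lambda>p. actY (fst p) (snd p))"
    using assms(6) unfolding continuous_group_action_def by auto
  obtain \<eta>0 where \<eta>0: "\<eta>0 > 0" "\<forall>a b. \<pi> a = \<pi> b \<and> dist a b < \<eta>0 \<longrightarrow> a = b"
    using sep_lemma[OF assms(4) assms(12)] by blast
  define \<eta> where "\<eta> = \<eta>0 / 2"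
  have "\<eta> > 0" using \<eta>0 \<eta>_def by simp
  have pw: "\<exists>d>0. \<forall>b. dist a b < d \<longrightarrow> (\<forall>k\<in>K. dist (actY k a) (actY k b) < e)"
    if epos: "e > 0" for a e
  proof -
    have cont: "continuous_on (UNIV \<times> K) (\<lambda>p. actY (snd p) (fst p))"
    proof -
      have "continuous_on (UNIV \<times> K) (\<lambda>p. (\<lambda>q. actY (fst q) (snd q)) (snd p, fst p))"
        by (rule continuous_on_compose2[OF actc]) (intro continuous_intros, simp)
      then show ?thesis by simp
    qed
    obtain X0 where X0: "a \<in> X0" "open X0" "\<forall>x\<in>X0 \<inter> UNIV. \<forall>t\<in>K. dist (actY t x) (actY t a) \<le> e/2"
    proof -
      have "e/2 > 0" using epos by simp
      obtain X1 where X1: "a \<in> X1" "open X1" "\<forall>x\<in>X1 \<inter> UNIV. \<forall>t\<in>K. dist (actY t x) (actY t a) \<le> e/2"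
        using continuous_on_prod_compactE[OF cont K(1) _ \<open>e/2 > 0\<close>, of a] by auto
      show ?thesis by (rule that[OF X1])
    qed
    obtain d where d: "d > 0" "ball a d \<subseteq> X0" using openE[OF X0(2) X0(1)] by metis
    show ?thesis
    proof (intro exI conjI allI impI ballI)
      show "d > 0" by fact
      fix b k assume "dist a b < d" "k \<in> K"
      then have "b \<in> X0" using d(2) by (auto simp: mem_ball)
      then have "dist (actY k b) (actY k a) \<le> e/2" using X0(3) \<open>k \<in> K\<close> by simp
      then show "dist (actY k a) (actY k b) < e" using epos by (simp add: dist_commute)
    qed
  qed
  obtain \<delta>K where \<delta>K: "\<delta>K > 0" "\<forall>a b. dist a b < \<delta>K \<longrightarrow> (\<forall>k\<in>K. dist (actY k a) (actY k b) < \<eta>)"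
    using unif_lemma[OF assms(4) pw \<open>\<eta> > 0\<close>] by blast
  show ?thesis unfolding equicontinuous_system_def
  proof (intro allI impI)
    fix y and \<epsilon> :: real assume "\<epsilon> > 0"
    define \<epsilon>1 where "\<epsilon>1 = min \<epsilon> \<delta>K"
    have "\<epsilon>1 > 0" using \<open>\<epsilon> > 0\<close> \<delta>K \<epsilon>1_def by simp
    obtain \<rho> where \<rho>: "\<rho> > 0" "\<forall>a b. dist a b < \<eta>0/2 \<and> dist (\<pi> a) (\<pi> b) < \<rho> \<longrightarrow> dist a b < \<epsilon>1"
      using lift_lemma[OF assms(4) assms(8) \<eta>0(2) \<eta>0(1) \<open>\<epsilon>1 > 0\<close>] by blast
    obtain \<sigma> where \<sigma>: "\<sigma> > 0" "\<forall>x'. dist (\<pi> y) x' < \<sigma> \<longrightarrow> (\<forall>t. dist (actX t (\<pi> y)) (actX t x') < \<rho>)"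
      using assms(14) \<rho>(1) unfolding equicontinuous_system_def by blast
    obtain \<delta>2 where \<delta>2: "\<delta>2 > 0" "\<forall>y'. dist y' y < \<delta>2 \<longrightarrow> dist (\<pi> y') (\<pi> y) < \<sigma>"
      using assms(8) \<sigma>(1) unfolding continuous_on_iff by blast
    show "\<exists>d>0. \<forall>y'. dist y y' < d \<longrightarrow> (\<forall>t. dist (actY t y) (actY t y') < \<epsilon>)"
    proof (intro exI conjI allI impI)
      show "min \<epsilon>1 \<delta>2 > 0" using \<open>\<epsilon>1 > 0\<close> \<delta>2 by simp
      fix y' t assume yy: "dist y y' < min \<epsilon>1 \<delta>2"
      have "dist (\<pi> y) (\<pi> y') < \<sigma>" using \<delta>2 yy by (simp add: dist_commute)
      then have Xc: "\<And>t. dist (\<pi> (actY t y)) (\<pi> (actY t y')) < \<rho>"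
        using \<sigma>(2) assms(10) by simp
      have "\<forall>t\<in>nfold_sum n K. dist (actY t y) (actY t y') < \<epsilon>1" for n
      proof (induction n)
        case 0
        then show ?case using yy act0 by simp
      next
        case (Suc n)
        show ?case
        proof
          fix t assume "t \<in> nfold_sum (Suc n) K"
          then obtain a b where ab: "t = a + b" "a \<in> K" "b \<in> nfold_sum n K" by auto
          have "dist (actY b y) (actY b y') < \<epsilon>1" using Suc.IH ab(3) by blast
          then have "dist (actY b y) (actY b y') < \<delta>K" unfolding \<epsilon>1_def by linarith
          then have "dist (actY a (actY b y)) (actY a (actY b y')) < \<eta>" using \<delta>K(2) ab(2) by blast
          then have "dist (actY t y) (actY t y') < \<eta>0/2" using ab actadd \<eta>_def by simp
          then show "dist (actY t y) (actY t y') < \<epsilon>1" using \<rho>(2) Xc[of t] by blast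
        qed
      qed
      moreover obtain n where "t \<in> nfold_sum n K" using K(2) by blast
      ultimately have "dist (actY t y) (actY t y') < \<epsilon>1" by blast
      then show "dist (actY t y) (actY t y') < \<epsilon>" unfolding \<epsilon>1_def by linarith
    qed
  qed
qed

end
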